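(* Consider the perturbed Collins First Form $$\dot x=-y+x^2y+\varepsilon\sum_{0\le i+j\le3}a_{i,j}x^iy^j,\qquad \dot y=x+xy^2+\varepsilon\sum_{0\le i+j\le3}b_{i,j}x^iy^j,$$ with real coefficients. Then the unperturbed equation is $dr/d\theta=r^3\cos\theta\sin\theta$, whose solution with $r(0)=z$ is $r(\theta,z)=z/\sqrt{1-z^2\sin^2\theta}$, which is $2\pi$-periodic and positive exactly for $z\in D=(0,1)$, and the first order averaged function $f_1$ satisfies, for $z\in(0,1)$ and $s=\sqrt{1-z^2}\in(0,1)$, $$z\,f_1(z)=\pi(1-s)\Big((b_{0,1}-b_{0,3}-b_{2,1})s^3+(b_{0,1}-2a_{3,0}-b_{0,3}+b_{2,1})s^2+(a_{1,0}-a_{1,2}+a_{3,0}+2b_{0,3})s+a_{1,0}+a_{1,2}+a_{3,0}\Big).$$ In particular, $f_1$ has at most $3$ simple zeros in $(0,1)$, and there are coefficient choices for which it has exactly $3$; hence first order averaging yields at most three limit cycles of this system, and three is reached.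
   Context: Averaging framework (first order): in polar coordinates $x=r\cos\theta,y=r\sin\theta$, write $dr/d\theta=F_0(\theta,r)+\varepsilon F_1(\theta,r)+O(\varepsilon^2)$; let $r(\theta,z)$ solve $dr/d\theta=F_0$ with $r(0,z)=z$ and $Y(\theta,z)$ solve $Y'=\partial_rF_0(\theta,r(\theta,z))Y$, $Y(0,z)=1$. The first order averaged function is $f_1(z)=Y(2\pi,z)\int_0^{2\pi}Y(s,z)^{-1}F_1(s,r(s,z))\,ds$. Each simple zero of $f_1$ in $D$ gives, for $|\varepsilon|$ small, a limit cycle bifurcating from a periodic orbit of the unperturbed center. *)

theory Defs
  imports "HOL-Analysis.Analysis"
begin

definition pert :: "(nat \<Rightarrow> nat \<Rightarrow> real) \<Rightarrow> real \<Rightarrow> real \<Rightarrow> real" where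
  "pert c x y = (\<Sum>i\<le>3. \<Sum>j\<le>3 - i. c i j * x ^ i * y ^ j)"

definition collinsP :: "(nat \<Rightarrow> nat \<Rightarrow> real) \<Rightarrow> real \<Rightarrow> real \<Rightarrow> real \<Rightarrow> real" where
  "collinsP a eps x y = - y + x ^ 2 * y + eps * pert a x y"

definition collinsQ :: "(nat \<Rightarrow> nat \<Rightarrow> real) \<Rightarrow> real \<Rightarrow> real \<Rightarrow> real \<Rightarrow> real" where
  "collinsQ b eps x y = x + x * y ^ 2 + eps * pert b x y"

text \<open>dr/dtheta = rdot / thetadot for the planar field (P,Q) in polar coordinates
  x = r cos theta, y = r sin theta.\<close>
definition polar_drdtheta ::
  "(real \<Rightarrow> real \<Rightarrow> real) \<Rightarrow> (real \<Rightarrow> real \<Rightarrow> real) \<Rightarrow> real \<Rightarrow> real \<Rightarrow> real" where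
  "polar_drdtheta P Q \<theta> r =
     (let x = r * cos \<theta>; y = r * sin \<theta> in
      (cos \<theta> * P x y + sin \<theta> * Q x y) / ((cos \<theta> * Q x y - sin \<theta> * P x y) / r))"

definition collinsF0 :: "real \<Rightarrow> real \<Rightarrow> real" where
  "collinsF0 \<theta> r = polar_drdtheta (collinsP (\<lambda>_ _. 0) 0) (collinsQ (\<lambda>_ _. 0) 0) \<theta> r"

definition collinsF1 :: "(nat \<Rightarrow> nat \<Rightarrow> real) \<Rightarrow> (nat \<Rightarrow> nat \<Rightarrow> real) \<Rightarrow> real \<Rightarrow> real \<Rightarrow> real" where
  "collinsF1 a b \<theta> r = deriv (\<lambda>eps. polar_drdtheta (collinsP a eps) (collinsQ b eps) \<theta> r) 0"

definition rsol :: "real \<Rightarrow> real \<Rightarrow> real" where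
  "rsol \<theta> z = z / sqrt (1 - z ^ 2 * (sin \<theta>) ^ 2)"

text \<open>Y(theta,z): the solution of Y' = d_r F0(theta, r(theta,z)) Y, Y(0,z) = 1
  (scalar linear ODE, written via its explicit solution).\<close>
definition avgY :: "(real \<Rightarrow> real \<Rightarrow> real) \<Rightarrow> (real \<Rightarrow> real \<Rightarrow> real) \<Rightarrow> real \<Rightarrow> real \<Rightarrow> real" where
  "avgY F0 r \<theta> z = exp (integral {0..\<theta>} (\<lambda>s. deriv (F0 s) (r s z)))"

definition averaged_f1 ::
  "(real \<Rightarrow> real \<Rightarrow> real) \<Rightarrow> (real \<Rightarrow> real \<Rightarrow> real) \<Rightarrow> (real \<Rightarrow> real \<Rightarrow> real) \<Rightarrow> real \<Rightarrow> real" where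
  "averaged_f1 F0 F1 r z =
     avgY F0 r (2 * pi) z * integral {0..2 * pi} (\<lambda>s. F1 s (r s z) / avgY F0 r s z)"

definition collins_f1 :: "(nat \<Rightarrow> nat \<Rightarrow> real) \<Rightarrow> (nat \<Rightarrow> nat \<Rightarrow> real) \<Rightarrow> real \<Rightarrow> real" where
  "collins_f1 a b = averaged_f1 collinsF0 (collinsF1 a b) rsol"

definition simple_zeros :: "(real \<Rightarrow> real) \<Rightarrow> real set \<Rightarrow> real set" where
  "simple_zeros f S = {z \<in> S. f z = 0 \<and> f differentiable (at z) \<and> deriv f z \<noteq> 0}"

end

theory Submission
  imports Defs "HOL-Computational_Algebra.Polynomial"
begin



lemma F0_eq: "collinsF0 \<theta> r = r ^ 3 * cos \<theta> * sin \<theta>"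
proof (cases "r = 0")
  case True then show ?thesis
    by (simp add: collinsF0_def polar_drdtheta_def collinsP_def collinsQ_def)
next
  case False
  have s: "sin \<theta> ^ 2 + cos \<theta> ^ 2 = 1" by simp
  have d: "(cos \<theta> * (r * cos \<theta> + r * cos \<theta> * (r * sin \<theta>)\<^sup>2) -
       sin \<theta> * (- (r * sin \<theta>) + (r * cos \<theta>)\<^sup>2 * (r * sin \<theta>))) = r"
    using s by algebra
  have n: "(cos \<theta> * (- (r * sin \<theta>) + (r * cos \<theta>)\<^sup>2 * (r * sin \<theta>)) +
       sin \<theta> * (r * cos \<theta> + r * cos \<theta> * (r * sin \<theta>)\<^sup>2)) = r ^ 3 * cos \<theta> * sin \<theta>"
    using s by algebra
  show ?thesis unfolding collinsF0_def polar_drdtheta_def collinsP_def collinsQ_def Let_def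
    using False by (simp only: d n mult_zero_left add_0_right) simp
qed


lemma w_pos: assumes "\<bar>z::real\<bar> < 1" shows "1 - z^2 * (sin t)^2 > 0"
proof -
  have "\<bar>z\<bar>^2 < 1^2" using assms by (intro power_strict_mono) auto
  then have "z^2 < 1" by simp
  moreover have "(sin t)^2 \<le> 1" by (simp add: abs_square_le_1)
  then have "z^2 * (sin t)^2 \<le> z^2 * 1" by (intro mult_left_mono) auto
  ultimately show ?thesis by linarith
qed

lemma rsol_deriv:
  assumes "\<bar>z\<bar> < 1"
  shows "((\<lambda>t. rsol t z) has_real_derivative (rsol \<theta> z)^3 * cos \<theta> * sin \<theta>) (at \<theta>)"
proof -
  define w where "w = 1 - z^2 * (sin \<theta>)^2"
  have wp: "w > 0" using w_pos[OF assms] w_def by simp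
  have e: "sqrt w ^ 2 = w" using wp by simp
  show ?thesis unfolding rsol_def
    using wp[unfolded w_def]
    apply (auto intro!: derivative_eq_intros)
    unfolding w_def[symmetric]
    using wp e
    by (simp add: field_simps power3_eq_cube e power2_eq_square)
qed


lemma F1_eq:
  fixes r \<theta> :: real
  assumes r: "r \<noteq> 0"
  shows "collinsF1 a b \<theta> r = (1 + r^2 * (sin \<theta>)^2) * cos \<theta> * pert a (r * cos \<theta>) (r * sin \<theta>)
     + (1 - r^2 * (cos \<theta>)^2) * sin \<theta> * pert b (r * cos \<theta>) (r * sin \<theta>)"
proof -
  define c where "c = cos \<theta>"
  define s where "s = sin \<theta>"
  define A where "A = pert a (r * c) (r * s)"
  define B where "B = pert b (r * c) (r * s)"
  have cs: "s^2 + c^2 = 1" unfolding s_def c_def by simp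
  have N: "\<And>e. c * (- (r * s) + (r * c)\<^sup>2 * (r * s) + e * A) + s * (r * c + r * c * (r * s)\<^sup>2 + e * B)
      = r^3 * c * s + e * (c * A + s * B)"
    using cs by algebra
  have D: "\<And>e. c * (r * c + r * c * (r * s)\<^sup>2 + e * B) - s * (- (r * s) + (r * c)\<^sup>2 * (r * s) + e * A)
      = r + e * (c * B - s * A)"
    using cs by algebra
  have feq: "(\<lambda>e. polar_drdtheta (collinsP a e) (collinsQ b e) \<theta> r)
     = (\<lambda>e. (r^3 * c * s + e * (c * A + s * B)) / ((r + e * (c * B - s * A)) / r))"
    unfolding polar_drdtheta_def collinsP_def collinsQ_def Let_def
    unfolding c_def[symmetric] s_def[symmetric] A_def[symmetric] B_def[symmetric] N D ..
  have der: "((\<lambda>e. (r^3 * c * s + e * (c * A + s * B)) / ((r + e * (c * B - s * A)) / r))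
      has_real_derivative (c * A + s * B) - r^2 * c * s * (c * B - s * A)) (at 0)"
    using r
    apply (auto intro!: derivative_eq_intros)
    apply (simp add: field_simps power2_eq_square power3_eq_cube)
    done
  have "collinsF1 a b \<theta> r = (c * A + s * B) - r^2 * c * s * (c * B - s * A)"
    unfolding collinsF1_def feq using der by (rule DERIV_imp_deriv)
  also have "\<dots> = (1 + r^2 * s^2) * c * A + (1 - r^2 * c^2) * s * B"
    by (simp add: algebra_simps power2_eq_square)
  finally show ?thesis unfolding c_def s_def A_def B_def .
qed


lemma ftc_real:
  fixes F f :: "real \<Rightarrow> real"
  assumes "a \<le> b" "\<And>x. (F has_real_derivative f x) (at x)"
  shows "(f has_integral F b - F a) {a..b}"
proof (rule fundamental_theorem_of_calculus[OF assms(1)])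
  fix x assume "x \<in> {a..b}"
  have "(F has_vector_derivative f x) (at x)"
    using assms(2)[of x] by (simp add: has_real_derivative_iff_has_vector_derivative)
  then show "(F has_vector_derivative f x) (at x within {a..b})"
    by (rule has_vector_derivative_at_within)
qed

lemma deriv_F0: "deriv (collinsF0 s) x = 3 * x^2 * cos s * sin s"
proof -
  have "collinsF0 s = (\<lambda>r. r ^ 3 * cos s * sin s)" by (rule ext) (rule F0_eq)
  moreover have "((\<lambda>r. r ^ 3 * cos s * sin s) has_real_derivative 3 * x^2 * cos s * sin s) (at x)"
    by (auto intro!: derivative_eq_intros)
  ultimately show ?thesis by (simp add: DERIV_imp_deriv)
qed

lemma aux12: "4 - Z * S * 4 = 4 * (1 - Z * S) \<Longrightarrow> (1 - Z * S) \<noteq> 0 \<Longrightarrow>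
  12 * (c * (s * Z)) / (4 - Z * S * 4) = 3 * Z * c * s / (1 - Z * S)" for Z S c s :: real
  by (simp add: field_simps)

lemma avgY_eq:
  assumes z: "\<bar>z\<bar> < 1" and th: "0 \<le> \<theta>"
  shows "1 / avgY collinsF0 rsol \<theta> z = sqrt (1 - z^2 * (sin \<theta>)^2) ^ 3"
proof -
  let ?w = "\<lambda>t. 1 - z^2 * (sin t)^2"
  have wp: "\<And>t. ?w t > 0" using w_pos[OF z] by blast
  have int: "((\<lambda>s. deriv (collinsF0 s) (rsol s z)) has_integral
      (-(3/2) * ln (?w \<theta>) - (-(3/2) * ln (?w 0)))) {0..\<theta>}"
  proof (rule ftc_real[OF th])
    fix x
    have ne: "?w x \<noteq> 0" using wp[of x] by linarith
    have r2: "(rsol x z)^2 = z^2 / ?w x" unfolding rsol_def using wp[of x]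
      by (simp add: power_divide)
    have "((\<lambda>t. -(3/2) * ln (?w t)) has_real_derivative 3 * z^2 * cos x * sin x / ?w x) (at x)"
      using wp[of x] apply (auto intro!: derivative_eq_intros)
      apply (subst aux12)
      using ne by simp_all
    then show "((\<lambda>t. -(3/2) * ln (?w t)) has_real_derivative deriv (collinsF0 x) (rsol x z)) (at x)"
      unfolding deriv_F0 r2 by simp
  qed
  have "avgY collinsF0 rsol \<theta> z = exp (-(3/2) * ln (?w \<theta>))"
    unfolding avgY_def using integral_unique[OF int] by simp
  also have "-(3/2) * ln (?w \<theta>) = - (of_nat 3 * ln (sqrt (?w \<theta>)))"
    using wp[of \<theta>] by (simp add: ln_sqrt)
  finally have "avgY collinsF0 rsol \<theta> z = exp (- (of_nat 3 * ln (sqrt (?w \<theta>))))" .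
  then have "1 / avgY collinsF0 rsol \<theta> z = exp (of_nat 3 * ln (sqrt (?w \<theta>)))"
    by (simp add: exp_minus inverse_eq_divide)
  also have "\<dots> = exp (ln (sqrt (?w \<theta>))) ^ 3" by (rule exp_of_nat_mult)
  also have "\<dots> = sqrt (?w \<theta>) ^ 3" using wp[of \<theta>] by simp
  finally show ?thesis .
qed


lemma int_reflect_shift:
  fixes f :: "real \<Rightarrow> real"
  shows "integral {0..L} (\<lambda>x. f (c - x)) = integral {c - L..c} f"
proof -
  have "integral {0..L} (\<lambda>x. (\<lambda>y. f (- y)) (x + - c)) = integral {-c..L-c} (\<lambda>y. f (- y))"
    using integral_shift_real_ivl[where a="-c" and b="L-c" and c="-c" and f="\<lambda>y. f (- y)"] by simp
  moreover have "integral {-c..L-c} (\<lambda>y. f (- y)) = integral {c - L..c} f"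
    using Henstock_Kurzweil_Integration.integral_reflect_real[where a="c - L" and b=c and f=f] by simp
  ultimately show ?thesis by simp
qed

lemma periodic_shift:
  fixes f :: "real \<Rightarrow> real"
  assumes cont: "continuous_on UNIV f" and per: "\<And>x. f (x + 2 * pi) = f x"
  shows "integral {-pi..pi} f = integral {0..2*pi} f"
proof -
  have int: "\<And>a b. f integrable_on {a..b}"
    using cont by (intro integrable_continuous_interval) (auto intro: continuous_on_subset)
  have "integral {-pi..pi} f = integral {-pi..0} f + integral {0..pi} f"
    using Henstock_Kurzweil_Integration.integral_combine[where a="-pi" and c=0 and b=pi and f=f] int by simp
  also have "integral {-pi..0} f = integral {pi..2*pi} f"
  proof -
    have "integral {pi - 2*pi..2*pi - 2*pi} (\<lambda>x. f (x + 2*pi)) = integral {pi..2*pi} f"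
      by (rule integral_shift_real_ivl)
    then show ?thesis using per by simp
  qed
  also have "integral {pi..2*pi} f + integral {0..pi} f = integral {0..2*pi} f"
    using Henstock_Kurzweil_Integration.integral_combine[where a=0 and c=pi and b="2*pi" and f=f] int by simp
  finally show ?thesis .
qed

lemma sym1:
  fixes f :: "real \<Rightarrow> real"
  shows "integral {0..2*pi} (\<lambda>x. f (2*pi - x)) = integral {0..2*pi} f"
  using int_reflect_shift[where L="2*pi" and f=f and c="2*pi"] by simp

lemma sym2:
  fixes f :: "real \<Rightarrow> real"
  assumes cont: "continuous_on UNIV f" and per: "\<And>x. f (x + 2 * pi) = f x"
  shows "integral {0..2*pi} (\<lambda>x. f (pi - x)) = integral {0..2*pi} f"
  using int_reflect_shift[where L="2*pi" and f=f and c="pi"] periodic_shift[OF assms] by simp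



lemma int_sin2: "((\<lambda>x. (sin x)^2) has_integral pi) {0..2*pi}"
proof -
  have "((\<lambda>x. (sin x)^2) has_integral ((\<lambda>x. x/2 - sin x * cos x / 2) (2*pi) - (\<lambda>x. x/2 - sin x * cos x / 2) 0)) {0..2*pi}"
  proof (rule ftc_real)
    fix x
    show "((\<lambda>x. x/2 - sin x * cos x / 2) has_real_derivative (sin x)^2) (at x)"
      apply (auto intro!: derivative_eq_intros)
      using sin_cos_squared_add[of x] by algebra
  qed simp
  then show ?thesis by simp
qed

lemma keyH:
  fixes c s S z :: real
  assumes cs: "c^2 + s^2 = 1" and S2: "S^2 = 1 - z^2" and Dp: "0 < c^2 + S * s^2" and Sp: "0 < S"
    and wp: "0 < 1 - z^2 * s^2"
  shows "(1 - inverse (1 + ((1 - S) * s * c / (c^2 + S * s^2))^2) *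
        ((c * (1 - S) * c - s * ((1 - S) * s)) * (c^2 + S * s^2) -
         (1 - S) * s * c * (2 * (c * s) * S - 2 * (s * c))) /
        ((c^2 + S * s^2) * (c^2 + S * s^2))) / S = 1 / (1 - z^2 * s^2)"
proof -
  define D where "D = c^2 + S * s^2"
  define N where "N = (1 - S) * s * c"
  define M where "M = (c * (1 - S) * c - s * ((1 - S) * s)) * (c^2 + S * s^2) -
         (1 - S) * s * c * (2 * (c * s) * S - 2 * (s * c))"
  define w where "w = 1 - z^2 * s^2"
  have Dp': "D > 0" using Dp D_def by simp
  have DN: "D^2 + N^2 > 0" using Dp' by (simp add: add_pos_nonneg)
  have e1: "1 - inverse (1 + (N / D)^2) * (M / (D * D)) = (D^2 + N^2 - M) / (D^2 + N^2)"
    using Dp' DN by (simp add: field_simps power2_eq_square)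
  have e2: "w * (D^2 + N^2 - M) = S * (D^2 + N^2)"
    unfolding w_def D_def N_def M_def using cs S2 by algebra
  have "(1 - inverse (1 + (N / D)^2) * (M / (D * D))) / S = 1 / w"
  proof -
    have SDN: "S * D^2 + S * N^2 > 0" using DN Sp by (metis distrib_left mult_pos_pos)
    show ?thesis unfolding e1 using e2 DN Sp SDN wp[folded w_def] by (simp add: field_simps)
  qed
  then show ?thesis unfolding D_def N_def M_def w_def by simp
qed

lemma int_invw:
  fixes z :: real
  assumes z: "0 < z" "z < 1"
  shows "((\<lambda>x. 1 / (1 - z^2 * (sin x)^2)) has_integral 2 * pi / sqrt (1 - z^2)) {0..2*pi}"
proof -
  define S where "S = sqrt (1 - z^2)"
  have z2: "z^2 < 1" using z by (simp add: power_less_one_iff abs_square_less_1)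
  have Sp: "S > 0" unfolding S_def using z2 by simp
  have S2: "S^2 = 1 - z^2" unfolding S_def using z2 by simp
  define H where "H x = (x - arctan ((1 - S) * sin x * cos x / ((cos x)^2 + S * (sin x)^2))) / S" for x
  have den: "(cos x)^2 + S * (sin x)^2 > 0" for x
  proof (cases "cos x = 0")
    case True then have "(sin x)^2 = 1" using sin_squared_eq[of x] by simp
    then show ?thesis using True Sp by simp
  next
    case False then have "(cos x)^2 > 0" by simp
    moreover have "S * (sin x)^2 \<ge> 0" using Sp by simp
    ultimately show ?thesis by linarith
  qed
  have w: "1 - z^2 * (sin x)^2 > 0" for x
  proof -
    have "(sin x)^2 \<le> 1" by (simp add: abs_square_le_1)
    then have "z^2 * (sin x)^2 \<le> z^2 * 1" by (intro mult_left_mono) auto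
    then show ?thesis using z2 by linarith
  qed
  have "((\<lambda>x. 1 / (1 - z^2 * (sin x)^2)) has_integral H (2*pi) - H 0) {0..2*pi}"
  proof (rule ftc_real)
    fix x
    show "(H has_real_derivative 1 / (1 - z^2 * (sin x)^2)) (at x)"
      unfolding H_def
      using den[of x] Sp apply (auto intro!: derivative_eq_intros)
      apply (rule keyH)
      using sin_cos_squared_add[of x] S2 w[of x] by (auto simp: add.commute)
  qed simp
  moreover have "H (2*pi) - H 0 = 2 * pi / S" unfolding H_def by simp
  ultimately show ?thesis unfolding S_def by simp
qed


lemma pert_expand:
  "pert c x y = c 0 0 + c 0 1 * y + c 0 2 * y^2 + c 0 3 * y^3
     + c 1 0 * x + c 1 1 * x * y + c 1 2 * x * y^2
     + c 2 0 * x^2 + c 2 1 * x^2 * y + c 3 0 * x^3"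
  unfolding pert_def by (simp add: numeral_eq_Suc atMost_Suc algebra_simps)

definition gg :: "(nat \<Rightarrow> nat \<Rightarrow> real) \<Rightarrow> (nat \<Rightarrow> nat \<Rightarrow> real) \<Rightarrow> real \<Rightarrow> real \<Rightarrow> real \<Rightarrow> real \<Rightarrow> real" where
  "gg a b z c s Q = Q * (c * pert a ((z / Q) * c) ((z / Q) * s)
      + (1 - z^2) * s * pert b ((z / Q) * c) ((z / Q) * s))"

definition ee0 where "ee0 a b z = (let m = a 1 2 + (1 - z^2) * b 2 1; n1 = m - 2 * a 3 0;
   n2 = a 3 0 - m + (1 - z^2) * b 0 3 in z * a 1 0 - z * n1 - n2 / z)"
definition ee1 where "ee1 a b z = (let m = a 1 2 + (1 - z^2) * b 2 1;
   n2 = a 3 0 - m + (1 - z^2) * b 0 3 in - z * a 1 0 + (1 - z^2) * z * b 0 1 - z * n2)"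
definition ee2 where "ee2 a b z = (let m = a 1 2 + (1 - z^2) * b 2 1; n1 = m - 2 * a 3 0;
   n2 = a 3 0 - m + (1 - z^2) * b 0 3 in z^3 * a 3 0 + z * n1 + n2 / z)"

lemma gg_sym_poly:
  fixes r :: real
  shows "Q * (c * pert a (r * c) (r * s) + (1 - z^2) * s * pert b (r * c) (r * s))
   + Q * (c * pert a (r * c) (r * - s) + (1 - z^2) * - s * pert b (r * c) (r * - s))
   + Q * (- c * pert a (r * - c) (r * s) + (1 - z^2) * s * pert b (r * - c) (r * s))
   + Q * (- c * pert a (r * - c) (r * - s) + (1 - z^2) * - s * pert b (r * - c) (r * - s))
   = 4 * Q * (a 1 0 * r * c^2 + a 1 2 * r^3 * c^2 * s^2 + a 3 0 * r^3 * c^4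
      + (1 - z^2) * (b 0 1 * r * s^2 + b 0 3 * r^3 * s^4 + b 2 1 * r^3 * c^2 * s^2))"
  unfolding pert_expand by algebra

lemma gg_sym:
  fixes z c s Q :: real
  assumes z: "z \<noteq> 0" and Q: "Q > 0" and cs: "c^2 + s^2 = 1" and Q2: "Q^2 = 1 - z^2 * s^2"
  shows "gg a b z c s Q + gg a b z c (-s) Q + gg a b z (-c) s Q + gg a b z (-c) (-s) Q
    = 4 * (ee0 a b z + ee1 a b z * s^2 + ee2 a b z / Q^2)"
proof -
  have "gg a b z c s Q + gg a b z c (-s) Q + gg a b z (-c) s Q + gg a b z (-c) (-s) Q
    = 4 * Q * (a 1 0 * (z/Q) * c^2 + a 1 2 * (z/Q)^3 * c^2 * s^2 + a 3 0 * (z/Q)^3 * c^4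
      + (1 - z^2) * (b 0 1 * (z/Q) * s^2 + b 0 3 * (z/Q)^3 * s^4 + b 2 1 * (z/Q)^3 * c^2 * s^2))"
    unfolding gg_def by (rule gg_sym_poly)
  also have "\<dots> = 4 * (ee0 a b z + ee1 a b z * s^2 + ee2 a b z / Q^2)"
  proof -
    have c2: "c^2 = 1 - s^2" using cs by simp
    have "Q * (a 1 0 * (z/Q) * c^2 + a 1 2 * (z/Q)^3 * c^2 * s^2 + a 3 0 * (z/Q)^3 * c^4
      + (1 - z^2) * (b 0 1 * (z/Q) * s^2 + b 0 3 * (z/Q)^3 * s^4 + b 2 1 * (z/Q)^3 * c^2 * s^2))
      = (ee0 a b z + ee1 a b z * s^2 + ee2 a b z / Q^2)"
      unfolding ee0_def ee1_def ee2_def Let_def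
      using z Q apply (simp add: field_simps)
      using c2 Q2 by algebra
    then show ?thesis by simp
  qed
  finally show ?thesis .
qed

lemma final_id:
  fixes z S :: real
  assumes z: "z \<noteq> 0" and S: "S > 0" and S2: "S^2 = 1 - z^2"
  shows "z * (2 * pi * ee0 a b z + pi * ee1 a b z + 2 * pi * ee2 a b z / S) = pi * (1 - S) *
            ((b 0 1 - b 0 3 - b 2 1) * S ^ 3
             + (b 0 1 - 2 * a 3 0 - b 0 3 + b 2 1) * S ^ 2
             + (a 1 0 - a 1 2 + a 3 0 + 2 * b 0 3) * S
             + a 1 0 + a 1 2 + a 3 0)"
  unfolding ee0_def ee1_def ee2_def Let_def
  using z S apply (simp add: field_simps)
  using S2 by algebra




definition qq where "qq z x = sqrt (1 - z^2 * (sin x)^2)"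
definition GG where "GG a b z x = gg a b z (cos x) (sin x) (qq z x)"

lemma qq_pos: "\<bar>z\<bar> < 1 \<Longrightarrow> qq z x > 0"
  unfolding qq_def using w_pos by simp

lemma qq_sq: "\<bar>z\<bar> < 1 \<Longrightarrow> (qq z x)^2 = 1 - z^2 * (sin x)^2"
  unfolding qq_def using w_pos[of z x] by simp

lemma integrand_eq:
  assumes z: "0 < z" "z < 1" and x: "0 \<le> x"
  shows "collinsF1 a b x (rsol x z) / avgY collinsF0 rsol x z = GG a b z x"
proof -
  have za: "\<bar>z\<bar> < 1" using z by simp
  define Q where "Q = qq z x"
  have Q: "Q > 0" using qq_pos[OF za] Q_def by simp
  have Q2: "Q^2 = 1 - z^2 * (sin x)^2" using qq_sq[OF za] Q_def by simp
  have r: "rsol x z = z / Q" unfolding rsol_def Q_def qq_def ..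
  have Y: "1 / avgY collinsF0 rsol x z = Q^3" using avgY_eq[OF za x] Q_def qq_def by simp
  have cs: "(cos x)^2 + (sin x)^2 = 1" by simp
  have "collinsF1 a b x (rsol x z) / avgY collinsF0 rsol x z
      = collinsF1 a b x (z / Q) * Q^3" using Y r by (metis divide_inverse inverse_eq_divide mult.commute times_divide_eq_right mult_1)
  also have "\<dots> = ((1 + (z/Q)^2 * (sin x)^2) * Q^3) * cos x * pert a ((z/Q) * cos x) ((z/Q) * sin x)
     + ((1 - (z/Q)^2 * (cos x)^2) * Q^3) * sin x * pert b ((z/Q) * cos x) ((z/Q) * sin x)"
    using z Q by (subst F1_eq) (auto simp: algebra_simps)
  also have "(1 + (z/Q)^2 * (sin x)^2) * Q^3 = Q"
    using Q Q2 by (simp add: field_simps power2_eq_square power3_eq_cube)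
  also have "(1 - (z/Q)^2 * (cos x)^2) * Q^3 = Q * (1 - z^2)"
  proof -
    have "(1 - (z/Q)^2 * (cos x)^2) * Q^3 = Q * (Q^2 - z^2 * (cos x)^2)"
      using Q by (simp add: field_simps power2_eq_square power3_eq_cube)
    also have "Q^2 - z^2 * (cos x)^2 = 1 - z^2" unfolding Q2 using cs by algebra
    finally show ?thesis .
  qed
  finally show ?thesis unfolding GG_def gg_def Q_def by (simp add: algebra_simps)
qed

lemma f1_integral:
  assumes z: "0 < z" "z < 1"
  shows "collins_f1 a b z = integral {0..2*pi} (GG a b z)"
proof -
  have za: "\<bar>z\<bar> < 1" using z by simp
  have "1 / avgY collinsF0 rsol (2*pi) z = 1" using avgY_eq[OF za, of "2*pi"] by simp
  then have Y1: "avgY collinsF0 rsol (2*pi) z = 1" by (simp add: divide_eq_1_iff)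
  have "integral {0..2*pi} (\<lambda>s. collinsF1 a b s (rsol s z) / avgY collinsF0 rsol s z)
      = integral {0..2*pi} (GG a b z)"
    by (rule integral_cong) (use integrand_eq[OF z] in auto)
  then show ?thesis unfolding collins_f1_def averaged_f1_def Y1 by simp
qed



lemma GG_cont: assumes "\<bar>z\<bar> < 1" shows "continuous_on UNIV (GG a b z)"
proof -
  have ne: "\<And>x. sqrt (1 - z^2 * (sin x)^2) \<noteq> 0" using qq_pos[OF assms] unfolding qq_def
    by (metis less_irrefl)
  show ?thesis unfolding GG_def gg_def qq_def pert_expand
    by (intro continuous_intros) (use ne in auto)
qed

lemma GG_per: "GG a b z (x + 2*pi) = GG a b z x"
  unfolding GG_def qq_def by simp

lemma sc_facts:
  "cos (2*pi - x) = cos x" "sin (2*pi - x) = - sin x"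
  "cos (pi - x) = - cos x" "sin (pi - x) = sin x"
  "cos (pi - (2*pi - x)) = - cos x" "sin (pi - (2*pi - x)) = - sin x"
  by (simp_all add: sin_diff cos_diff)

lemma GG_sym:
  assumes z: "0 < z" "z < 1"
  shows "GG a b z x + GG a b z (2*pi - x) + GG a b z (pi - x) + GG a b z (pi - (2*pi - x))
    = 4 * (ee0 a b z + ee1 a b z * (sin x)^2 + ee2 a b z * (1 / (1 - z^2 * (sin x)^2)))"
proof -
  have za: "\<bar>z\<bar> < 1" using z by simp
  have "GG a b z x + GG a b z (2*pi - x) + GG a b z (pi - x) + GG a b z (pi - (2*pi - x))
    = gg a b z (cos x) (sin x) (qq z x) + gg a b z (cos x) (- sin x) (qq z x)
      + gg a b z (- cos x) (sin x) (qq z x) + gg a b z (- cos x) (- sin x) (qq z x)"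
    unfolding GG_def sc_facts qq_def by simp
  also have "\<dots> = 4 * (ee0 a b z + ee1 a b z * (sin x)^2 + ee2 a b z / (qq z x)^2)"
    by (rule gg_sym) (use z qq_pos[OF za] qq_sq[OF za] in auto)
  finally show ?thesis using qq_sq[OF za] by simp
qed

lemma GG_integral:
  assumes z: "0 < z" "z < 1"
  shows "integral {0..2*pi} (GG a b z) = 2 * pi * ee0 a b z + pi * ee1 a b z + 2 * pi * ee2 a b z / sqrt (1 - z^2)"
proof -
  have za: "\<bar>z\<bar> < 1" using z by simp
  define f where "f = GG a b z"
  have cf: "continuous_on UNIV f" unfolding f_def by (rule GG_cont[OF za])
  have pf: "\<And>x. f (x + 2*pi) = f x" unfolding f_def by (rule GG_per)
  define f2 where "f2 x = f (pi - x)" for x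
  have cf2: "continuous_on UNIV f2" unfolding f2_def
    by (rule continuous_on_compose2[OF cf]) (auto intro: continuous_intros)
  have pf2: "\<And>x. f2 (x + 2*pi) = f2 x" unfolding f2_def
    using pf by (metis add.commute diff_add_cancel diff_diff_eq2 pf)
  have cf1: "continuous_on UNIV (\<lambda>x. f (2*pi - x))"
    by (rule continuous_on_compose2[OF cf]) (auto intro: continuous_intros)
  have cf3: "continuous_on UNIV (\<lambda>x. f2 (2*pi - x))"
    by (rule continuous_on_compose2[OF cf2]) (auto intro: continuous_intros)
  have int: "g integrable_on {0..2*pi}" if "continuous_on UNIV g" for g :: "real \<Rightarrow> real"
    by (rule integrable_continuous_interval) (rule continuous_on_subset[OF that], simp)
  define I where "I = integral {0..2*pi} f"
  have I1: "integral {0..2*pi} (\<lambda>x. f (2*pi - x)) = I" unfolding I_def by (rule sym1)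
  have I2: "integral {0..2*pi} f2 = I" unfolding I_def f2_def by (rule sym2[OF cf pf])
  have I3: "integral {0..2*pi} (\<lambda>x. f2 (2*pi - x)) = I" using sym1[of f2] I2 by simp
  have "integral {0..2*pi} (\<lambda>x. f x + f (2*pi - x) + f2 x + f2 (2*pi - x)) = 4 * I"
    using I1 I2 I3 int[OF cf] int[OF cf1] int[OF cf2] int[OF cf3]
    by (simp add: integral_add integrable_add I_def)
  moreover have "(\<lambda>x. f x + f (2*pi - x) + f2 x + f2 (2*pi - x)) =
     (\<lambda>x. 4 * (ee0 a b z + ee1 a b z * (sin x)^2 + ee2 a b z * (1 / (1 - z^2 * (sin x)^2))))"
    unfolding f2_def f_def using GG_sym[OF z] by auto
  moreover have "((\<lambda>x. 4 * (ee0 a b z + ee1 a b z * (sin x)^2 + ee2 a b z * (1 / (1 - z^2 * (sin x)^2))))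
     has_integral 4 * (ee0 a b z * (2*pi) + ee1 a b z * pi + ee2 a b z * (2 * pi / sqrt (1 - z^2)))) {0..2*pi}"
    by (intro has_integral_cmul has_integral_add has_integral_mult_right int_sin2 int_invw z)
       (use has_integral_const_real[of "ee0 a b z" 0 "2*pi"] in \<open>simp add: mult.commute\<close>)
  ultimately have "4 * I = 4 * (ee0 a b z * (2*pi) + ee1 a b z * pi + ee2 a b z * (2 * pi / sqrt (1 - z^2)))"
    by (simp add: integral_unique)
  then have "I = ee0 a b z * (2*pi) + ee1 a b z * pi + ee2 a b z * (2 * pi / sqrt (1 - z^2))" by simp
  then show ?thesis unfolding I_def f_def by simp
qed



definition Pc :: "(nat \<Rightarrow> nat \<Rightarrow> real) \<Rightarrow> (nat \<Rightarrow> nat \<Rightarrow> real) \<Rightarrow> real \<Rightarrow> real" where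
  "Pc a b s = (b 0 1 - b 0 3 - b 2 1) * s ^ 3
             + (b 0 1 - 2 * a 3 0 - b 0 3 + b 2 1) * s ^ 2
             + (a 1 0 - a 1 2 + a 3 0 + 2 * b 0 3) * s
             + a 1 0 + a 1 2 + a 3 0"
definition Pd :: "(nat \<Rightarrow> nat \<Rightarrow> real) \<Rightarrow> (nat \<Rightarrow> nat \<Rightarrow> real) \<Rightarrow> real \<Rightarrow> real" where
  "Pd a b s = 3 * (b 0 1 - b 0 3 - b 2 1) * s ^ 2
             + 2 * (b 0 1 - 2 * a 3 0 - b 0 3 + b 2 1) * s
             + (a 1 0 - a 1 2 + a 3 0 + 2 * b 0 3)"
definition TT :: "real \<Rightarrow> real" where "TT z = sqrt (1 - z^2)"

lemma TT_props: assumes "0 < z" "z < 1" shows "0 < TT z" "TT z < 1" "(TT z)^2 = 1 - z^2" "TT (TT z) = z"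
proof -
  have z2: "z^2 < 1" "0 < z^2" using assms by (simp_all add: power_less_one_iff)
  show "0 < TT z" unfolding TT_def using z2 by simp
  show "TT z < 1" unfolding TT_def using z2 by simp
  show T2: "(TT z)^2 = 1 - z^2" unfolding TT_def using z2 by simp
  show "TT (TT z) = z" unfolding TT_def using T2[unfolded TT_def] assms by simp
qed

lemma f1_closed:
  assumes z: "0 < z" "z < 1"
  shows "collins_f1 a b z = pi * (1 - TT z) * Pc a b (TT z) / z"
proof -
  have "z * collins_f1 a b z = pi * (1 - TT z) * Pc a b (TT z)"
    unfolding f1_integral[OF z] GG_integral[OF z] Pc_def
    using final_id[of z "TT z" a b] TT_props[OF z] z unfolding TT_def by simp
  then show ?thesis using z by (simp add: field_simps)
qed

definition hf where "hf a b s = pi * (1 - s) * Pc a b s"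
definition hfd where "hfd a b s = pi * (- Pc a b s + (1 - s) * Pd a b s)"

lemma hf_deriv: "(hf a b has_real_derivative hfd a b s) (at s)"
  unfolding hf_def hfd_def Pc_def Pd_def
  by (auto intro!: derivative_eq_intros simp: algebra_simps power2_eq_square power3_eq_cube)

lemma TT_deriv: assumes z: "0 < z" "z < 1" shows "(TT has_real_derivative - z / TT z) (at z)"
proof -
  have z2: "1 - z^2 > 0" using TT_props(1,3)[OF z] by (metis zero_less_power2 less_irrefl)
  show ?thesis unfolding TT_def using z2
    by (auto intro!: derivative_eq_intros simp: field_simps)
qed

lemma k_deriv:
  assumes z: "0 < z" "z < 1"
  shows "((\<lambda>z. hf a b (TT z) / z) has_real_derivative
     (hfd a b (TT z) * (- z / TT z) * z - hf a b (TT z) * 1) / (z * z)) (at z)"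
  by (rule DERIV_divide[OF DERIV_chain2[OF hf_deriv TT_deriv[OF z]] DERIV_ident]) (use z in simp)

lemma f1_deriv:
  assumes z: "0 < z" "z < 1"
  shows "(collins_f1 a b has_real_derivative
     (hfd a b (TT z) * (- z / TT z) * z - hf a b (TT z) * 1) / (z * z)) (at z)"
  by (rule has_field_derivative_transform_within_open[OF k_deriv[OF z], of "{0<..<1}"])
     (use z f1_closed in \<open>auto simp: hf_def\<close>)

lemma simple_zeros_eq:
  "simple_zeros (collins_f1 a b) {0<..<1} = {z \<in> {0<..<1}. Pc a b (TT z) = 0 \<and> Pd a b (TT z) \<noteq> 0}"
proof (intro set_eqI iffI)
  fix z assume zs: "z \<in> simple_zeros (collins_f1 a b) {0<..<1}"
  then have z: "0 < z" "z < 1" and f0: "collins_f1 a b z = 0" and dn: "deriv (collins_f1 a b) z \<noteq> 0"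
    unfolding simple_zeros_def by auto
  have T: "0 < TT z" "TT z < 1" using TT_props[OF z] by auto
  have P0: "Pc a b (TT z) = 0" using f0 f1_closed[OF z] z T by simp
  have "deriv (collins_f1 a b) z = (hfd a b (TT z) * (- z / TT z) * z - hf a b (TT z) * 1) / (z * z)"
    by (rule DERIV_imp_deriv[OF f1_deriv[OF z]])
  also have "\<dots> = - pi * (1 - TT z) * Pd a b (TT z) / TT z"
    using P0 z T unfolding hf_def hfd_def by (simp add: field_simps)
  finally have "Pd a b (TT z) \<noteq> 0" using dn by auto
  then show "z \<in> {z \<in> {0<..<1}. Pc a b (TT z) = 0 \<and> Pd a b (TT z) \<noteq> 0}" using z P0 by simp
next
  fix z assume "z \<in> {z \<in> {0<..<1}. Pc a b (TT z) = 0 \<and> Pd a b (TT z) \<noteq> 0}"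
  then have z: "0 < z" "z < 1" and P0: "Pc a b (TT z) = 0" and Pd0: "Pd a b (TT z) \<noteq> 0" by auto
  have T: "0 < TT z" "TT z < 1" using TT_props[OF z] by auto
  have f0: "collins_f1 a b z = 0" using f1_closed[OF z] P0 by simp
  have "deriv (collins_f1 a b) z = (hfd a b (TT z) * (- z / TT z) * z - hf a b (TT z) * 1) / (z * z)"
    by (rule DERIV_imp_deriv[OF f1_deriv[OF z]])
  also have "\<dots> = - pi * (1 - TT z) * Pd a b (TT z) / TT z"
    using P0 z T unfolding hf_def hfd_def by (simp add: field_simps)
  finally have dn: "deriv (collins_f1 a b) z \<noteq> 0" using Pd0 T by simp
  have "collins_f1 a b differentiable (at z)"
    using f1_deriv[OF z] real_differentiable_def by blast
  then show "z \<in> simple_zeros (collins_f1 a b) {0<..<1}"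
    unfolding simple_zeros_def using z f0 dn by simp
qed



lemma TT_inj: "inj_on TT {0<..<1}"
  by (rule inj_on_inverseI[where g = TT]) (auto intro: TT_props)

lemma bound:
  "finite (simple_zeros (collins_f1 a b) {0<..<1}) \<and> card (simple_zeros (collins_f1 a b) {0<..<1}) \<le> 3"
proof -
  define p where "p = [: a 1 0 + a 1 2 + a 3 0, a 1 0 - a 1 2 + a 3 0 + 2 * b 0 3,
      b 0 1 - 2 * a 3 0 - b 0 3 + b 2 1, b 0 1 - b 0 3 - b 2 1 :]"
  have pP: "poly p s = Pc a b s" for s unfolding p_def Pc_def
    by (simp add: algebra_simps power2_eq_square power3_eq_cube)
  let ?Z = "simple_zeros (collins_f1 a b) {0<..<1}"
  show ?thesis
  proof (cases "p = 0")
    case True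
    then have "Pd a b s = 0" for s unfolding p_def Pd_def by simp
    then have "?Z = {}" unfolding simple_zeros_eq by simp
    then show ?thesis by simp
  next
    case False
    have sub: "TT ` ?Z \<subseteq> {x. poly p x = 0}" unfolding simple_zeros_eq pP by auto
    have inj: "inj_on TT ?Z" by (rule inj_on_subset[OF TT_inj]) (auto simp: simple_zeros_eq)
    have fin: "finite {x. poly p x = 0}" by (rule poly_roots_finite[OF False])
    have finZ: "finite ?Z" using finite_imageD[OF finite_subset[OF sub fin] inj] .
    have "card ?Z = card (TT ` ?Z)" using card_image[OF inj] by simp
    also have "\<dots> \<le> card {x. poly p x = 0}" by (rule card_mono[OF fin sub])
    also have "\<dots> \<le> degree p" by (rule card_poly_roots_bound[OF False])
    also have "\<dots> \<le> 3" unfolding p_def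
      by (auto intro!: le_trans[OF degree_pCons_le])
    finally show ?thesis using finZ by simp
  qed
qed

definition a0 :: "nat \<Rightarrow> nat \<Rightarrow> real" where
  "a0 i j = (if i = 1 \<and> j = 0 then 19/2 else if i = 1 \<and> j = 2 then -25/2 else 0)"
definition b0 :: "nat \<Rightarrow> nat \<Rightarrow> real" where
  "b0 i j = (if i = 0 \<and> j = 1 then -8 else if i = 2 \<and> j = 1 then -40 else 0)"

lemma Pc0: "Pc a0 b0 s = (4 * s - 1) * (2 * s - 1) * (4 * s - 3)"
  unfolding Pc_def a0_def b0_def by (simp add: algebra_simps power2_eq_square power3_eq_cube)
lemma Pd0: "Pd a0 b0 s = 96 * s^2 - 96 * s + 22"
  unfolding Pd_def a0_def b0_def by simp

lemma exist3:
  "finite (simple_zeros (collins_f1 a0 b0) {0<..<1}) \<and> card (simple_zeros (collins_f1 a0 b0) {0<..<1}) = 3"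
proof -
  have eq: "simple_zeros (collins_f1 a0 b0) {0<..<1} = TT ` {1/4, 1/2, 3/4}"
  proof (intro set_eqI iffI)
    fix z assume "z \<in> simple_zeros (collins_f1 a0 b0) {0<..<1}"
    then have z: "0 < z" "z < 1" and P: "Pc a0 b0 (TT z) = 0" unfolding simple_zeros_eq by auto
    have "TT z \<in> {1/4, 1/2, 3/4}" using P unfolding Pc0 by auto
    moreover have "z = TT (TT z)" using TT_props[OF z] by simp
    ultimately show "z \<in> TT ` {1/4, 1/2, 3/4}" by blast
  next
    fix z assume "z \<in> TT ` {1/4, 1/2, 3/4}"
    then obtain s where s: "s \<in> {1/4, 1/2, 3/4}" and zs: "z = TT s" by blast
    have s01: "0 < s" "s < 1" using s by auto
    have z: "0 < z" "z < 1" using TT_props[OF s01] zs by auto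
    have Ts: "TT z = s" using TT_props[OF s01] zs by simp
    show "z \<in> simple_zeros (collins_f1 a0 b0) {0<..<1}"
    proof -
      have "s = 1/4 \<or> s = 1/2 \<or> s = 3/4" using s by simp
      moreover have "Pc a0 b0 (1/4) = 0 \<and> Pd a0 b0 (1/4) \<noteq> 0"
        by (simp add: Pc0 Pd0 power2_eq_square)
      moreover have "Pc a0 b0 (1/2) = 0 \<and> Pd a0 b0 (1/2) \<noteq> 0"
        by (simp add: Pc0 Pd0 power2_eq_square)
      moreover have "Pc a0 b0 (3/4) = 0 \<and> Pd a0 b0 (3/4) \<noteq> 0"
        by (simp add: Pc0 Pd0 power2_eq_square)
      ultimately have "Pc a0 b0 s = 0 \<and> Pd a0 b0 s \<noteq> 0" by blast
      then show ?thesis unfolding simple_zeros_eq using z by (simp add: Ts)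
    qed
  qed
  have inj: "inj_on TT {1/4, 1/2, 3/4::real}" by (rule inj_on_subset[OF TT_inj]) auto
  have "card (TT ` {1/4, 1/2, 3/4::real}) = card {1/4, 1/2, 3/4::real}" by (rule card_image[OF inj])
  also have "\<dots> = 3" by simp
  finally show ?thesis unfolding eq by simp
qed



theorem mainTheorem5:
  shows "(\<forall>\<theta> r. collinsF0 \<theta> r = r ^ 3 * cos \<theta> * sin \<theta>)
    \<and> (\<forall>z \<in> {0<..<1}. rsol 0 z = z
          \<and> (\<forall>\<theta>. ((\<lambda>t. rsol t z) has_real_derivative collinsF0 \<theta> (rsol \<theta> z)) (at \<theta>))
          \<and> (\<forall>\<theta>. rsol (\<theta> + 2 * pi) z = rsol \<theta> z)
          \<and> (\<forall>\<theta>. rsol \<theta> z > 0))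
    \<and> {z. \<forall>\<theta>. 1 - z ^ 2 * (sin \<theta>) ^ 2 > 0 \<and> rsol \<theta> z > 0} = {0<..<1}
    \<and> (\<forall>a b. \<forall>z \<in> {0<..<1}. let s = sqrt (1 - z ^ 2) in
          z * collins_f1 a b z = pi * (1 - s) *
            ((b 0 1 - b 0 3 - b 2 1) * s ^ 3
             + (b 0 1 - 2 * a 3 0 - b 0 3 + b 2 1) * s ^ 2
             + (a 1 0 - a 1 2 + a 3 0 + 2 * b 0 3) * s
             + a 1 0 + a 1 2 + a 3 0))
    \<and> (\<forall>a b. finite (simple_zeros (collins_f1 a b) {0<..<1})
          \<and> card (simple_zeros (collins_f1 a b) {0<..<1}) \<le> 3)
    \<and> (\<exists>a b. finite (simple_zeros (collins_f1 a b) {0<..<1})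
          \<and> card (simple_zeros (collins_f1 a b) {0<..<1}) = 3)"
proof (intro conjI)
  show "\<forall>\<theta> r. collinsF0 \<theta> r = r ^ 3 * cos \<theta> * sin \<theta>" using F0_eq by blast
next
  show "\<forall>z \<in> {0<..<1}. rsol 0 z = z
          \<and> (\<forall>\<theta>. ((\<lambda>t. rsol t z) has_real_derivative collinsF0 \<theta> (rsol \<theta> z)) (at \<theta>))
          \<and> (\<forall>\<theta>. rsol (\<theta> + 2 * pi) z = rsol \<theta> z)
          \<and> (\<forall>\<theta>. rsol \<theta> z > 0)"
  proof
    fix z :: real assume "z \<in> {0<..<1}"
    then have z: "0 < z" "z < 1" by auto
    then have za: "\<bar>z\<bar> < 1" by simp
    show "rsol 0 z = z
          \<and> (\<forall>\<theta>. ((\<lambda>t. rsol t z) has_real_derivative collinsF0 \<theta> (rsol \<theta> z)) (at \<theta>))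
          \<and> (\<forall>\<theta>. rsol (\<theta> + 2 * pi) z = rsol \<theta> z)
          \<and> (\<forall>\<theta>. rsol \<theta> z > 0)"
      using rsol_deriv[OF za] w_pos[OF za] z by (auto simp: F0_eq rsol_def)
  qed
next
  show "{z. \<forall>\<theta>. 1 - z ^ 2 * (sin \<theta>) ^ 2 > 0 \<and> rsol \<theta> z > 0} = {0<..<1}"
  proof (intro set_eqI iffI)
    fix z :: real assume "z \<in> {z. \<forall>\<theta>. 1 - z ^ 2 * (sin \<theta>) ^ 2 > 0 \<and> rsol \<theta> z > 0}"
    then have hh: "\<forall>\<theta>. 1 - z ^ 2 * (sin \<theta>) ^ 2 > 0 \<and> rsol \<theta> z > 0" by simp
    have h: "1 - z ^ 2 * (sin (pi/2)) ^ 2 > 0" "rsol (pi/2) z > 0" using hh[rule_format, of "pi/2"] by auto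
    from h(1) have z2: "z^2 < 1" by simp
    then have "\<bar>z\<bar> < 1" by (simp add: abs_square_less_1)
    moreover have "z > 0" using h(2) z2 unfolding rsol_def by (simp add: zero_less_divide_iff)
    ultimately show "z \<in> {0<..<1}" by auto
  next
    fix z :: real assume "z \<in> {0<..<1}"
    then have z: "0 < z" "z < 1" by auto
    then have za: "\<bar>z\<bar> < 1" by simp
    show "z \<in> {z. \<forall>\<theta>. 1 - z ^ 2 * (sin \<theta>) ^ 2 > 0 \<and> rsol \<theta> z > 0}"
      using w_pos[OF za] z by (auto simp: rsol_def)
  qed
next
  show "\<forall>a b. \<forall>z \<in> {0<..<1}. let s = sqrt (1 - z ^ 2) in
          z * collins_f1 a b z = pi * (1 - s) *
            ((b 0 1 - b 0 3 - b 2 1) * s ^ 3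
             + (b 0 1 - 2 * a 3 0 - b 0 3 + b 2 1) * s ^ 2
             + (a 1 0 - a 1 2 + a 3 0 + 2 * b 0 3) * s
             + a 1 0 + a 1 2 + a 3 0)"
  proof (intro allI ballI)
    fix a b and z :: real assume "z \<in> {0<..<1}"
    then have z: "0 < z" "z < 1" by auto
    show "let s = sqrt (1 - z ^ 2) in
          z * collins_f1 a b z = pi * (1 - s) *
            ((b 0 1 - b 0 3 - b 2 1) * s ^ 3
             + (b 0 1 - 2 * a 3 0 - b 0 3 + b 2 1) * s ^ 2
             + (a 1 0 - a 1 2 + a 3 0 + 2 * b 0 3) * s
             + a 1 0 + a 1 2 + a 3 0)"
      unfolding Let_def f1_closed[OF z] using z by (simp add: TT_def Pc_def)
  qed
next
  show "\<forall>a b. finite (simple_zeros (collins_f1 a b) {0<..<1})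
          \<and> card (simple_zeros (collins_f1 a b) {0<..<1}) \<le> 3" using bound by blast
next
  show "\<exists>a b. finite (simple_zeros (collins_f1 a b) {0<..<1})
          \<and> card (simple_zeros (collins_f1 a b) {0<..<1}) = 3" using exist3 by blast
qed


end
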